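(* For every $1\leq k\leq n$, $c_{S^{n-k}}\geq\exp(-e^{54+5n})$, where $S^{n-k}$ denotes the unit sphere of $\mathbb{R}^{n-k+1}$, viewed as a codimension-$k$ submanifold of $\mathbb{R}^n\supset\mathbb{R}^{n-k+1}$.
   Context: For a closed codimension-$k$ submanifold $\Sigma\subset\mathbb{R}^n$: a pair $(U,P)$ ($U\subset\mathbb{R}^n$ bounded open, $P=(P_1,\dots,P_k)\in\mathbb{R}[x_1,\dots,x_n]^k$) is regular if $0$ is a regular value of $P|_U$ and $P^{-1}(0)\cap U$ is compact; $\|P\|_{L^2}^2=\sum_i\int_{\mathbb{C}^n}|P_i(z)|^2e^{-\pi|z|^2}dz$; $\mathcal{T}_{(U,P)}$ is the set of $(\delta,\epsilon)\in(0,\infty)^2$ such that some compact $K\subset U$ has $\inf_{U\setminus K}|P|>\delta$, and $|(d_yP)^*(w)|\geq\epsilon|w|$ for all $w\in\mathbb{R}^k$ whenever $y\in U$, $|P(y)|<\delta$ ($^*$ = adjoint); $R_{(U,P)}=\max(1,\sup_U|y|)$; $\rho_R=\inf_{s>0}\frac{(R+s)^{2n}}{s^{2n}}e^{\pi(R+s)^2}$; $\tau_{(U,P)}=24k\rho_{R_{(U,P)}}\|P\|_{L^2}^2\inf_{\mathcal{T}_{(U,P)}}(\delta^{-2}+\pi n\epsilon^{-2})$; $m_\tau=\sup_{a\geq\sqrt\tau}\frac{1}{\sqrt\pi}(1-\frac{\tau}{a^2})\int_a^\infty e^{-t^2}dt$; $\mathcal{I}_\Sigma$ is the set of regular pairs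 such that $P^{-1}(0)\cap U$ contains a subset isotopic to $\Sigma$ in $\mathbb{R}^n$; $c_\Sigma=\sup_{(U,P)\in\mathcal{I}_\Sigma}m_{\tau_{(U,P)}}/(2^n\mathrm{Vol}(B(R_{(U,P)})))$ if $\Sigma$ has trivial normal bundle, $c_\Sigma=0$ otherwise; $\mathrm{Vol}(B(R))$ is the volume of the Euclidean ball of radius $R$ in $\mathbb{R}^n$. *)

theory Defs
  imports "HOL-Analysis.Analysis"
begin

type_synonym 'n mpoly_coeffs = "('n \<Rightarrow> nat) \<Rightarrow> real"

definition is_mpoly :: "'n mpoly_coeffs \<Rightarrow> bool" where
  "is_mpoly c \<longleftrightarrow> finite {\<alpha>. c \<alpha> \<noteq> 0}"

definition mpoly_eval :: "('n::finite) mpoly_coeffs \<Rightarrow> real^'n \<Rightarrow> real" where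
  "mpoly_eval c x = (\<Sum>\<alpha>\<in>{\<alpha>. c \<alpha> \<noteq> 0}. c \<alpha> * (\<Prod>i\<in>UNIV. (x $ i) ^ (\<alpha> i)))"

definition mpoly_ceval :: "('n::finite) mpoly_coeffs \<Rightarrow> complex^'n \<Rightarrow> complex" where
  "mpoly_ceval c z = (\<Sum>\<alpha>\<in>{\<alpha>. c \<alpha> \<noteq> 0}. complex_of_real (c \<alpha>) * (\<Prod>i\<in>UNIV. (z $ i) ^ (\<alpha> i)))"

text \<open>A k-tuple P = (P_0,...,P_{k-1}) is a function nat => coefficients; only indices < k matter.
  Vectors of R^k are functions nat => real (indices < k).\<close>

definition knorm :: "nat \<Rightarrow> (nat \<Rightarrow> real) \<Rightarrow> real" where
  "knorm k w = sqrt (\<Sum>i<k. (w i)\<^sup>2)"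

definition Pval :: "nat \<Rightarrow> (nat \<Rightarrow> ('n::finite) mpoly_coeffs) \<Rightarrow> real^'n \<Rightarrow> (nat \<Rightarrow> real)" where
  "Pval k P y = (\<lambda>i. if i < k then mpoly_eval (P i) y else 0)"

definition zero_set :: "nat \<Rightarrow> (nat \<Rightarrow> ('n::finite) mpoly_coeffs) \<Rightarrow> (real^'n) set \<Rightarrow> (real^'n) set" where
  "zero_set k P U = {y\<in>U. \<forall>i<k. mpoly_eval (P i) y = 0}"

text \<open>gradient of a polynomial; (d_y P)^* w = sum_i w_i grad P_i(y)\<close>
definition mpoly_grad :: "('n::finite) mpoly_coeffs \<Rightarrow> real^'n \<Rightarrow> real^'n" where
  "mpoly_grad c y = (\<chi> j. frechet_derivative (mpoly_eval c) (at y) (axis j 1))"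

definition dP_adj :: "nat \<Rightarrow> (nat \<Rightarrow> ('n::finite) mpoly_coeffs) \<Rightarrow> real^'n \<Rightarrow> (nat \<Rightarrow> real) \<Rightarrow> real^'n" where
  "dP_adj k P y w = (\<Sum>i<k. w i *\<^sub>R mpoly_grad (P i) y)"

definition regular_pair :: "nat \<Rightarrow> (real^'n::finite) set \<Rightarrow> (nat \<Rightarrow> 'n mpoly_coeffs) \<Rightarrow> bool" where
  "regular_pair k U P \<longleftrightarrow>
     open U \<and> bounded U \<and> (\<forall>i<k. is_mpoly (P i)) \<and>
     compact (zero_set k P U) \<and>
     (\<forall>y\<in>zero_set k P U. \<forall>w::nat\<Rightarrow>real. \<exists>h::real^'n.
         \<forall>i<k. frechet_derivative (mpoly_eval (P i)) (at y) h = w i)"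

definition L2sq :: "nat \<Rightarrow> (nat \<Rightarrow> ('n::finite) mpoly_coeffs) \<Rightarrow> real" where
  "L2sq k P = (\<Sum>i<k. \<integral>z. (cmod (mpoly_ceval (P i) z))\<^sup>2 * exp (- pi * (norm z)\<^sup>2) \<partial>(lborel :: (complex^'n) measure))"

text \<open>inf_{U - K} |P| > delta is expressed as: some delta' > delta bounds |P| from below on U - K
  (so that an empty U - K is allowed, inf over the empty set being +infinity).\<close>
definition Tset :: "nat \<Rightarrow> (real^'n::finite) set \<Rightarrow> (nat \<Rightarrow> 'n mpoly_coeffs) \<Rightarrow> (real \<times> real) set" where
  "Tset k U P = {(\<delta>, \<epsilon>). \<delta> > 0 \<and> \<epsilon> > 0 \<and>
      (\<exists>K. compact K \<and> K \<subseteq> U \<and> (\<exists>\<delta>'>\<delta>. \<forall>y\<in>U - K. knorm k (Pval k P y) \<ge> \<delta>')) \<and>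
      (\<forall>y\<in>U. knorm k (Pval k P y) < \<delta> \<longrightarrow>
          (\<forall>w::nat\<Rightarrow>real. norm (dP_adj k P y w) \<ge> \<epsilon> * knorm k w))}"

definition Rpair :: "(real^'n::finite) set \<Rightarrow> real" where
  "Rpair U = max 1 (SUP y\<in>U. norm y)"

definition rho :: "nat \<Rightarrow> real \<Rightarrow> real" where
  "rho n R = (INF s\<in>{0<..}. (R + s) ^ (2*n) / s ^ (2*n) * exp (pi * (R + s)\<^sup>2))"

definition tau :: "nat \<Rightarrow> (real^'n::finite) set \<Rightarrow> (nat \<Rightarrow> 'n mpoly_coeffs) \<Rightarrow> real" where
  "tau k U P = 24 * real k * rho CARD('n) (Rpair U) * L2sq k P *
      (INF p\<in>Tset k U P. 1 / (fst p)\<^sup>2 + pi * real CARD('n) / (snd p)\<^sup>2)"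

definition m_tau :: "real \<Rightarrow> real" where
  "m_tau \<tau> = (SUP a\<in>{sqrt \<tau>..}. (1 / sqrt pi) * (1 - \<tau> / a\<^sup>2) * integral {a..} (\<lambda>t. exp (- t\<^sup>2)))"

fun Ck :: "nat \<Rightarrow> ('a::euclidean_space \<Rightarrow> 'b::euclidean_space) \<Rightarrow> bool" where
  "Ck 0 f = continuous_on UNIV f"
| "Ck (Suc m) f = ((\<forall>x. f differentiable (at x)) \<and> (\<forall>v. Ck m (\<lambda>x. frechet_derivative f (at x) v)))"

definition smooth_map :: "('a::euclidean_space \<Rightarrow> 'b::euclidean_space) \<Rightarrow> bool" where
  "smooth_map f \<longleftrightarrow> (\<forall>m. Ck m f)"

definition ambient_isotopic :: "(real^'n::finite) set \<Rightarrow> (real^'n) set \<Rightarrow> bool" where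
  "ambient_isotopic S A \<longleftrightarrow>
     (\<exists>H :: (real \<times> (real^'n)) \<Rightarrow> (real^'n).
        smooth_map H \<and>
        (\<forall>t. bij (\<lambda>x. H (t, x)) \<and> smooth_map (inv (\<lambda>x. H (t, x)))) \<and>
        (\<forall>x. H (0, x) = x) \<and> (\<lambda>x. H (1, x)) ` S = A)"

definition I_set :: "nat \<Rightarrow> (real^'n::finite) set \<Rightarrow> ((real^'n) set \<times> (nat \<Rightarrow> 'n mpoly_coeffs)) set" where
  "I_set k \<Sigma> = {(U, P). regular_pair k U P \<and> (\<exists>A \<subseteq> zero_set k P U. ambient_isotopic \<Sigma> A)}"

text \<open>c_Sigma for a codimension-k submanifold with trivial normal bundle (as the spheres below are).
  Pairs with empty T contribute tau = +infinity, hence nothing positive; they are omitted.\<close>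
definition c_Sigma :: "nat \<Rightarrow> (real^'n::finite) set \<Rightarrow> ereal" where
  "c_Sigma k \<Sigma> = (SUP UP\<in>{UP \<in> I_set k \<Sigma>. Tset k (fst UP) (snd UP) \<noteq> {}}.
      ereal (m_tau (tau k (fst UP) (snd UP)) /
             (2 ^ CARD('n) * measure lborel (ball (0::real^'n) (Rpair (fst UP))))))"

definition coord_sphere :: "'n set \<Rightarrow> (real^'n::finite) set" where
  "coord_sphere J = {x. norm x = 1 \<and> (\<forall>i. i \<notin> J \<longrightarrow> x $ i = 0)}"

end

theory Submission
  imports Defs "HOL-Probability.Distributions"
begin

lemma Ck_const: "Ck m (\<lambda>x::'a::euclidean_space. c::'b::euclidean_space)"
proof (induction m arbitrary: c)
  case 0 then show ?case by simp
next
  case (Suc m)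
  have "\<And>x. frechet_derivative (\<lambda>x::'a. c) (at x) = (\<lambda>v. 0)"
    by (metis frechet_derivative_at has_derivative_const)
  then show ?case using Suc by simp
qed

lemma Ck_linear: assumes "bounded_linear (f::'a::euclidean_space \<Rightarrow> 'b::euclidean_space)"
  shows "Ck m f"
proof (cases m)
  case 0 then show ?thesis using assms by (simp add: linear_continuous_on)
next
  case (Suc m')
  have d: "\<And>x. frechet_derivative f (at x) = f"
    by (metis frechet_derivative_at bounded_linear_imp_has_derivative assms)
  have "\<And>x. f differentiable (at x)" using assms bounded_linear_imp_differentiable by blast
  then show ?thesis using Suc d by (simp add: Ck_const)
qed

lemma gauss1: "(\<integral>\<^sup>+x. ennreal (exp (- x\<^sup>2)) \<partial>lborel) = ennreal (sqrt pi)"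
proof -
  have "has_bochner_integral lborel (\<lambda>x::real. exp (-x\<^sup>2)*x^(2 * 0))
      (sqrt pi * (fact (2 * 0) / (2 ^ (2 * 0) * fact 0)))"
    using has_bochner_integral_even_function[OF gaussian_moment_even_pos[where k=0]] by simp
  then have h: "has_bochner_integral lborel (\<lambda>x::real. exp (-x\<^sup>2)) (sqrt pi)" by simp
  then show ?thesis
    by (metis has_bochner_integral_iff nn_integral_eq_integral AE_I2 exp_ge_zero)
qed


lemma gaussN: "has_bochner_integral lborel (\<lambda>z::'a::euclidean_space. exp (-(norm z)\<^sup>2)) (sqrt pi ^ DIM('a))"
proof -
  have eq: "\<And>z::'a. ennreal (exp (-(norm z)\<^sup>2)) = (\<Prod>b\<in>Basis. ennreal (exp (- (z \<bullet> b)\<^sup>2)))"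
  proof -
    fix z :: 'a
    have "(norm z)\<^sup>2 = (\<Sum>b\<in>Basis. (z \<bullet> b)\<^sup>2)"
      by (simp add: norm_eq_sqrt_inner euclidean_inner[of z z] power2_eq_square sum_nonneg)
    then have "exp (-(norm z)\<^sup>2) = (\<Prod>b\<in>Basis. exp (- (z \<bullet> b)\<^sup>2))"
      by (simp add: exp_sum[symmetric] sum_negf)
    then show "ennreal (exp (-(norm z)\<^sup>2)) = (\<Prod>b\<in>Basis. ennreal (exp (- (z \<bullet> b)\<^sup>2)))"
      by (simp add: prod_ennreal)
  qed
  have nn: "(\<integral>\<^sup>+z. ennreal (exp (-(norm z)\<^sup>2)) \<partial>(lborel::'a measure)) = ennreal (sqrt pi ^ DIM('a))"
    apply (simp only: eq)
    apply (subst nn_integral_lborel_prod[where f="\<lambda>b x. ennreal (exp (- x\<^sup>2))"])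
      apply auto[2]
    apply (simp add: gauss1 prod_ennreal ennreal_power)
    done
  have int: "integrable lborel (\<lambda>z::'a. exp (-(norm z)\<^sup>2))"
    by (rule integrableI_nn_integral_finite[OF _ _ nn]) auto
  have "integral\<^sup>L lborel (\<lambda>z::'a. exp (-(norm z)\<^sup>2)) = sqrt pi ^ DIM('a)"
    using nn_integral_eq_integral[OF int] nn by auto
  then show ?thesis using int by (simp add: has_bochner_integral_iff)
qed


definition mono1 :: "'n \<Rightarrow> 'n \<Rightarrow> nat" where "mono1 j = (\<lambda>i. if i = j then 1 else 0)"
definition mono2 :: "'n \<Rightarrow> 'n \<Rightarrow> nat" where "mono2 j = (\<lambda>i. if i = j then 2 else 0)"
definition cx :: "'n \<Rightarrow> 'n mpoly_coeffs" where "cx j = (\<lambda>\<alpha>. if \<alpha> = mono1 j then 1 else 0)"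
definition c0 :: "'n set \<Rightarrow> 'n mpoly_coeffs" where
  "c0 J = (\<lambda>\<alpha>. if \<alpha> = (\<lambda>_. 0) then -1 else if \<alpha> \<in> mono2 ` J then 1 else 0)"

lemma supp_cx: "{\<alpha>. cx j \<alpha> \<noteq> 0} = {mono1 j}" by (auto simp: cx_def)

lemma mono2_ne0: "mono2 j \<noteq> (\<lambda>_. 0)" by (auto simp: mono2_def fun_eq_iff)
lemma mono2_ne0': "(\<lambda>_. 0) \<noteq> mono2 j" using mono2_ne0 by metis
lemma inj_mono2: "inj mono2" by (auto simp: inj_def mono2_def fun_eq_iff split: if_splits)

lemma supp_c0: "{\<alpha>. c0 J \<alpha> \<noteq> 0} = insert (\<lambda>_. 0) (mono2 ` J)"
  using mono2_ne0 by (auto simp: c0_def)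

lemma is_mpoly_cx: "is_mpoly (cx j)" by (simp add: is_mpoly_def supp_cx)
lemma is_mpoly_c0: "is_mpoly (c0 (J::('n::finite) set))" by (simp add: is_mpoly_def supp_c0)

lemma prod_mono1: "(\<Prod>i\<in>UNIV. (x $ i) ^ (mono1 j i)) = (x::'a::comm_monoid_mult^'n::finite) $ j"
proof -
  have "(\<Prod>i\<in>UNIV. (x $ i) ^ (mono1 j i)) = (\<Prod>i\<in>UNIV. if i = j then x $ i else 1)"
    by (rule prod.cong) (auto simp: mono1_def)
  also have "\<dots> = x $ j" by (simp add: prod.delta)
  finally show ?thesis .
qed

lemma prod_mono2: "(\<Prod>i\<in>UNIV. (x $ i) ^ (mono2 j i)) = ((x::'a::comm_monoid_mult^'n::finite) $ j)\<^sup>2"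
proof -
  have "(\<Prod>i\<in>UNIV. (x $ i) ^ (mono2 j i)) = (\<Prod>i\<in>UNIV. if i = j then (x $ i)\<^sup>2 else 1)"
    by (rule prod.cong) (auto simp: mono2_def)
  also have "\<dots> = (x $ j)\<^sup>2" by (simp add: prod.delta)
  finally show ?thesis .
qed

lemma eval_cx: "mpoly_eval (cx j) x = x $ j"
  by (simp add: mpoly_eval_def supp_cx prod_mono1, simp add: cx_def)

lemma ceval_cx: "mpoly_ceval (cx j) z = z $ j"
  by (simp add: mpoly_ceval_def supp_cx prod_mono1, simp add: cx_def)

lemma eval_c0: "mpoly_eval (c0 J) x = (\<Sum>j\<in>J. (x $ j)\<^sup>2) - 1"
proof -
  have fin: "finite (mono2 ` J)" by simp
  have "mpoly_eval (c0 J) x = c0 J (\<lambda>_. 0) * (\<Prod>i\<in>UNIV. (x $ i) ^ 0)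
     + (\<Sum>\<alpha>\<in>mono2 ` J. c0 J \<alpha> * (\<Prod>i\<in>UNIV. (x $ i) ^ (\<alpha> i)))"
    unfolding mpoly_eval_def supp_c0 using mono2_ne0 by (subst sum.insert) (auto simp: mono2_ne0')
  also have "(\<Sum>\<alpha>\<in>mono2 ` J. c0 J \<alpha> * (\<Prod>i\<in>UNIV. (x $ i) ^ (\<alpha> i))) = (\<Sum>j\<in>J. (x $ j)\<^sup>2)"
    apply (subst sum.reindex[OF inj_on_subset[OF inj_mono2 subset_UNIV]])
    apply (unfold comp_def)
    apply (rule sum.cong) apply simp
    by (simp add: c0_def prod_mono2 mono2_ne0)
  finally show ?thesis by (simp add: c0_def)
qed

lemma ceval_c0: "mpoly_ceval (c0 J) z = (\<Sum>j\<in>J. (z $ j)\<^sup>2) - 1"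
proof -
  have "mpoly_ceval (c0 J) z = complex_of_real (c0 J (\<lambda>_. 0)) * (\<Prod>i\<in>UNIV. (z $ i) ^ 0)
     + (\<Sum>\<alpha>\<in>mono2 ` J. complex_of_real (c0 J \<alpha>) * (\<Prod>i\<in>UNIV. (z $ i) ^ (\<alpha> i)))"
    unfolding mpoly_ceval_def supp_c0 using mono2_ne0 by (subst sum.insert) (auto simp: mono2_ne0')
  also have "(\<Sum>\<alpha>\<in>mono2 ` J. complex_of_real (c0 J \<alpha>) * (\<Prod>i\<in>UNIV. (z $ i) ^ (\<alpha> i))) = (\<Sum>j\<in>J. (z $ j)\<^sup>2)"
    apply (subst sum.reindex[OF inj_on_subset[OF inj_mono2 subset_UNIV]])
    apply (unfold comp_def)
    apply (rule sum.cong) apply simp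
    by (simp add: c0_def prod_mono2 mono2_ne0)
  finally show ?thesis by (simp add: c0_def)
qed

lemma eval_cx_fun: "mpoly_eval (cx j) = (\<lambda>x. x $ j)" by (simp add: fun_eq_iff eval_cx)
lemma eval_c0_fun: "mpoly_eval (c0 J) = (\<lambda>x. (\<Sum>j\<in>J. (x $ j)\<^sup>2) - 1)" by (simp add: fun_eq_iff eval_c0)

lemma deriv_cx: "frechet_derivative (mpoly_eval (cx j)) (at y) = (\<lambda>h. h $ j)"
  unfolding eval_cx_fun
  by (rule frechet_derivative_at[OF bounded_linear_imp_has_derivative[OF bounded_linear_vec_nth], symmetric])

lemma hasderiv_c0: "((\<lambda>x::real^'n::finite. (\<Sum>j\<in>J. (x $ j)\<^sup>2) - 1) has_derivative (\<lambda>h. \<Sum>j\<in>J. 2 * y $ j * h $ j)) (at y)"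
proof -
  have "\<And>j. ((\<lambda>x::real^'n. (x $ j) * (x $ j)) has_derivative (\<lambda>h. y $ j * h $ j + h $ j * y $ j)) (at y)"
    by (intro has_derivative_mult bounded_linear_imp_has_derivative bounded_linear_vec_nth)
  then have "\<And>j. ((\<lambda>x::real^'n. (x $ j)\<^sup>2) has_derivative (\<lambda>h. 2 * y $ j * h $ j)) (at y)"
    by (simp add: power2_eq_square algebra_simps)
  then show ?thesis
    by (intro has_derivative_diff[where g'="\<lambda>_. 0", simplified] has_derivative_sum) auto
qed

lemma deriv_c0: "frechet_derivative (mpoly_eval (c0 J)) (at y) = (\<lambda>h. \<Sum>j\<in>J. 2 * y $ j * h $ j)"
  unfolding eval_c0_fun by (rule frechet_derivative_at[OF hasderiv_c0, symmetric])

lemma grad_cx: "mpoly_grad (cx j) y = axis j 1"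
  by (simp add: mpoly_grad_def deriv_cx vec_eq_iff axis_def)

lemma grad_c0: "mpoly_grad (c0 J) y = (\<chi> l. if l \<in> J then 2 * y $ l else 0)"
proof -
  have "\<And>j. (\<Sum>l\<in>J. 2 * y $ l * (axis j 1 $ l)) = (if j \<in> J then 2 * y $ j else 0)"
  proof -
    fix j
    have "(\<Sum>l\<in>J. 2 * y $ l * (axis j 1 $ l)) = (\<Sum>l\<in>J. if l = j then 2 * y $ l else 0)"
      by (rule sum.cong) (auto simp: axis_def)
    also have "\<dots> = (if j \<in> J then 2 * y $ j else 0)" by (simp add: sum.delta')
    finally show "(\<Sum>l\<in>J. 2 * y $ l * (axis j 1 $ l)) = (if j \<in> J then 2 * y $ j else 0)" .
  qed
  then show ?thesis unfolding mpoly_grad_def deriv_c0 by (simp add: vec_eq_iff)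
qed


lemma gauss_line: "has_bochner_integral lborel (\<lambda>x::real. exp (-x\<^sup>2)) (sqrt pi)"
proof -
  have "has_bochner_integral lborel (\<lambda>x::real. exp (-x\<^sup>2)*x^(2 * 0))
      (sqrt pi * (fact (2 * 0) / (2 ^ (2 * 0) * fact 0)))"
    using has_bochner_integral_even_function[OF gaussian_moment_even_pos[where k=0]] by simp
  then show ?thesis by simp
qed

lemma gauss_tail:
  fixes a :: real
  shows "(\<lambda>t. exp (- t\<^sup>2)) integrable_on {a..}"
    and "integral {a..} (\<lambda>t. exp (- t\<^sup>2)) \<le> sqrt pi"
proof -
  let ?f = "\<lambda>t::real. exp (- t\<^sup>2)"
  have il: "integrable lborel ?f" using gauss_line by (simp add: has_bochner_integral_iff)
  have hU: "(?f has_integral sqrt pi) UNIV"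
    using has_integral_integral_real[OF il] gauss_line by (simp add: has_bochner_integral_iff)
  then have iU: "?f integrable_on UNIV" by (rule has_integral_integrable)
  have aU: "?f absolutely_integrable_on UNIV"
    using iU absolutely_integrable_on_iff_nonneg[of UNIV ?f] by simp
  have "?f absolutely_integrable_on {a..}"
    by (rule set_integrable_subset[OF aU]) auto
  then show ia: "?f integrable_on {a..}" by (rule set_lebesgue_integral_eq_integral(1))
  have "integral {a..} ?f \<le> integral UNIV ?f"
    by (rule integral_subset_le[OF _ ia iU]) auto
  moreover have "integral UNIV ?f = sqrt pi" by (rule integral_unique[OF hU])
  ultimately show "integral {a..} ?f \<le> sqrt pi" by simp
qed

lemma gauss_tail_lower:
  fixes a :: real assumes a: "0 \<le> a"
  shows "integral {a..} (\<lambda>t. exp (- t\<^sup>2)) \<ge> exp (- (a+1)\<^sup>2)"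
proof -
  let ?f = "\<lambda>t::real. exp (- t\<^sup>2)"
  have ic: "?f integrable_on {a..a+1}"
    by (rule integrable_continuous_interval) (intro continuous_intros)
  have "integral {a..a+1} (\<lambda>t. exp (- (a+1)\<^sup>2)) \<le> integral {a..a+1} ?f"
  proof (rule integral_le)
    show "(\<lambda>t. exp (- (a+1)\<^sup>2)) integrable_on {a..a+1}" by (rule integrable_continuous_interval) (rule continuous_on_const)
    show "?f integrable_on {a..a+1}" by (rule ic)
    fix t assume t: "t \<in> {a..a+1}"
    then have "t\<^sup>2 \<le> (a+1)\<^sup>2" using a by (intro power_mono) auto
    then show "exp (- (a+1)\<^sup>2) \<le> exp (- t\<^sup>2)" by simp
  qed
  then have "exp (- (a+1)\<^sup>2) \<le> integral {a..a+1} ?f" by simp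
  also have "\<dots> \<le> integral {a..} ?f"
    by (rule integral_subset_le[OF _ ic gauss_tail(1)]) auto
  finally show ?thesis .
qed


lemma m_tau_lower:
  assumes t0: "0 \<le> \<tau>" and tT: "\<tau> \<le> T"
  shows "exp (-(4*T+4)) / (2 * sqrt pi) \<le> m_tau \<tau>"
proof -
  let ?g = "\<lambda>a. (1 / sqrt pi) * (1 - \<tau> / a\<^sup>2) * integral {a..} (\<lambda>t. exp (- t\<^sup>2))"
  define a where "a = sqrt (2*T+1)"
  have T0: "0 \<le> T" using t0 tT by simp
  have a2: "a\<^sup>2 = 2*T+1" using T0 by (simp add: a_def)
  have apos: "0 < a" using T0 by (simp add: a_def)
  have aS: "a \<in> {sqrt \<tau>..}" using tT T0 by (simp add: a_def)
  have bdd: "bdd_above (?g ` {sqrt \<tau>..})"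
  proof (rule bdd_aboveI2)
    fix b assume b: "b \<in> {sqrt \<tau>..}"
    have I0: "0 \<le> integral {b..} (\<lambda>t. exp (- t\<^sup>2))"
      by (rule integral_nonneg[OF gauss_tail(1)]) auto
    have I1: "integral {b..} (\<lambda>t. exp (- t\<^sup>2)) \<le> sqrt pi" by (rule gauss_tail(2))
    have f0: "0 \<le> 1 - \<tau> / b\<^sup>2"
    proof (cases "b = 0")
      case True then show ?thesis by simp
    next
      case False
      have "\<tau> \<le> b\<^sup>2" 
      proof -
        have "sqrt \<tau> \<le> b" using b by simp
        then have "(sqrt \<tau>)\<^sup>2 \<le> b\<^sup>2" using t0 by (intro power_mono) auto
        then show ?thesis using t0 by simp
      qed
      then show ?thesis using False by (simp add: field_simps)
    qed
    have f1: "1 - \<tau> / b\<^sup>2 \<le> 1" using t0 by simp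
    have "(1 - \<tau> / b\<^sup>2) * integral {b..} (\<lambda>t. exp (- t\<^sup>2)) \<le> 1 * sqrt pi"
      by (intro mult_mono f1 I1 I0) auto
    then have "(1 - \<tau> / b\<^sup>2) * integral {b..} (\<lambda>t. exp (- t\<^sup>2)) / sqrt pi \<le> sqrt pi / sqrt pi"
      by (intro divide_right_mono) auto
    then show "?g b \<le> 1" by simp
  qed
  have "?g a \<le> m_tau \<tau>" unfolding m_tau_def by (rule cSUP_upper[OF aS bdd])
  moreover have "exp (-(4*T+4)) / (2 * sqrt pi) \<le> ?g a"
  proof -
    have "\<tau> / a\<^sup>2 \<le> 1/2" unfolding a2 using tT T0 by (subst divide_le_eq) auto
    then have q: "1/2 \<le> 1 - \<tau> / a\<^sup>2" by linarith
    have "(a+1)\<^sup>2 \<le> 4*T+4"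
    proof -
      have "0 \<le> (a-1)\<^sup>2" by simp
      then have "(a+1)\<^sup>2 \<le> 2*a\<^sup>2 + 2" by (simp add: power2_eq_square algebra_simps)
      then show ?thesis using a2 by simp
    qed
    then have "exp (-(4*T+4)) \<le> exp (- (a+1)\<^sup>2)" by simp
    also have "\<dots> \<le> integral {a..} (\<lambda>t. exp (- t\<^sup>2))" using gauss_tail_lower apos by simp
    finally have I: "exp (-(4*T+4)) \<le> integral {a..} (\<lambda>t. exp (- t\<^sup>2))" .
    have "1/2 * exp (-(4*T+4)) \<le> (1 - \<tau> / a\<^sup>2) * integral {a..} (\<lambda>t. exp (- t\<^sup>2))"
      by (rule mult_mono[OF q I]) (use q in linarith, simp)
    then have "1/2 * exp (-(4*T+4)) / sqrt pi \<le> (1 - \<tau> / a\<^sup>2) * integral {a..} (\<lambda>t. exp (- t\<^sup>2)) / sqrt pi"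
      by (intro divide_right_mono) auto
    then show ?thesis by simp
  qed
  ultimately show ?thesis by linarith
qed


lemma normsq_vec: "(norm (x::'a::real_normed_vector^'n::finite))\<^sup>2 = (\<Sum>i\<in>UNIV. (norm (x $ i))\<^sup>2)"
  unfolding norm_vec_def L2_set_def by (simp add: sum_nonneg)

lemma sum_split_J: "(\<Sum>i\<in>UNIV. f i) = (\<Sum>i\<in>J. f i) + (\<Sum>i\<in>-J. (f i::real))" for J :: "'n::finite set"
  using sum.subset_diff[of J UNIV f] by (simp add: Compl_eq_Diff_UNIV add.commute)

definition PP :: "'n set \<Rightarrow> (nat \<Rightarrow> 'n) \<Rightarrow> nat \<Rightarrow> 'n mpoly_coeffs" where
  "PP J e i = (if i = 0 then c0 J else cx (e i))"

context
  fixes J :: "'n::finite set" and k :: nat and e :: "nat \<Rightarrow> 'n"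
  assumes k1: "1 \<le> k" and eb: "bij_betw e {1..<k} (-J)"
begin

definition sJ :: "real^'n \<Rightarrow> real" where "sJ y = (\<Sum>j\<in>J. (y $ j)\<^sup>2)"
definition sO :: "real^'n \<Rightarrow> real" where "sO y = (\<Sum>i\<in>{1..<k}. (y $ e i)\<^sup>2)"

lemma sumO: "(\<Sum>l\<in>-J. f l) = (\<Sum>i\<in>{1..<k}. f (e i))"
  using sum.reindex_bij_betw[OF eb, of f] by simp

lemma e_notJ: "i \<in> {1..<k} \<Longrightarrow> e i \<notin> J"
  using eb by (auto simp: bij_betw_def)

lemma e_inj: "i \<in> {1..<k} \<Longrightarrow> i' \<in> {1..<k} \<Longrightarrow> e i = e i' \<longleftrightarrow> i = i'"
  using eb by (auto simp: bij_betw_def inj_on_def)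

lemma notJ_e: "l \<notin> J \<Longrightarrow> \<exists>i\<in>{1..<k}. l = e i"
  using eb by (auto simp: bij_betw_def)

lemma sJ_nonneg: "0 \<le> sJ y" unfolding sJ_def by (simp add: sum_nonneg)
lemma sO_nonneg: "0 \<le> sO y" unfolding sO_def by (simp add: sum_nonneg)

lemma normsq: "(norm y)\<^sup>2 = sJ y + sO y"
  unfolding normsq_vec sJ_def sO_def
  by (subst sum_split_J[of _ J]) (simp add: sumO)

lemma lessk: "{..<k} = insert 0 {1..<k}" using k1 by auto

lemma knorm_sq: "(knorm k w)\<^sup>2 = (w 0)\<^sup>2 + (\<Sum>i\<in>{1..<k}. (w i)\<^sup>2)"
  unfolding knorm_def lessk by (simp add: sum_nonneg)

lemma knorm_Pval: "(knorm k (Pval k (PP J e) y))\<^sup>2 = (sJ y - 1)\<^sup>2 + sO y"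
proof -
  have "(\<Sum>i\<in>{1..<k}. (Pval k (PP J e) y i)\<^sup>2) = sO y"
    unfolding sO_def by (rule sum.cong) (auto simp: Pval_def PP_def eval_cx)
  moreover have "Pval k (PP J e) y 0 = sJ y - 1" using k1 by (simp add: Pval_def PP_def eval_c0 sJ_def)
  ultimately show ?thesis by (simp add: knorm_sq)
qed

lemma dP_comp:
  "dP_adj k (PP J e) y w = (w 0) *\<^sub>R (\<chi> l. if l \<in> J then 2 * y $ l else 0) + (\<Sum>i\<in>{1..<k}. w i *\<^sub>R axis (e i) 1)"
proof -
  have "dP_adj k (PP J e) y w = w 0 *\<^sub>R mpoly_grad (PP J e 0) y + (\<Sum>i\<in>{1..<k}. w i *\<^sub>R mpoly_grad (PP J e i) y)"
    unfolding dP_adj_def lessk by simp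
  also have "(\<Sum>i\<in>{1..<k}. w i *\<^sub>R mpoly_grad (PP J e i) y) = (\<Sum>i\<in>{1..<k}. w i *\<^sub>R axis (e i) 1)"
    by (rule sum.cong) (auto simp: PP_def grad_cx)
  also have "mpoly_grad (PP J e 0) y = (\<chi> l. if l \<in> J then 2 * y $ l else 0)"
    by (simp add: PP_def grad_c0)
  finally show ?thesis .
qed

lemma dP_J: "l \<in> J \<Longrightarrow> dP_adj k (PP J e) y w $ l = 2 * w 0 * y $ l"
proof -
  assume l: "l \<in> J"
  have "(\<Sum>i\<in>{1..<k}. w i * (axis (e i) 1 :: real^'n) $ l) = 0"
    by (rule sum.neutral) (use l e_notJ in \<open>auto simp: axis_def\<close>)
  then show ?thesis using l by (simp add: dP_comp)
qed

lemma dP_e: "i0 \<in> {1..<k} \<Longrightarrow> dP_adj k (PP J e) y w $ e i0 = w i0"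
proof -
  assume i0: "i0 \<in> {1..<k}"
  have "(\<Sum>i\<in>{1..<k}. w i * (axis (e i) 1 :: real^'n) $ e i0) = (\<Sum>i\<in>{1..<k}. if i = i0 then w i else 0)"
    by (rule sum.cong) (use i0 e_inj in \<open>auto simp: axis_def\<close>)
  also have "\<dots> = w i0" using i0 by simp
  finally show ?thesis using i0 e_notJ by (simp add: dP_comp)
qed

lemma dP_normsq: "(norm (dP_adj k (PP J e) y w))\<^sup>2 = 4 * (w 0)\<^sup>2 * sJ y + (\<Sum>i\<in>{1..<k}. (w i)\<^sup>2)"
proof -
  have "(norm (dP_adj k (PP J e) y w))\<^sup>2 = (\<Sum>l\<in>J. (dP_adj k (PP J e) y w $ l)\<^sup>2) + (\<Sum>i\<in>{1..<k}. (dP_adj k (PP J e) y w $ e i)\<^sup>2)"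
    unfolding normsq_vec by (subst sum_split_J[of _ J]) (simp add: sumO)
  also have "(\<Sum>l\<in>J. (dP_adj k (PP J e) y w $ l)\<^sup>2) = (\<Sum>l\<in>J. 4 * (w 0)\<^sup>2 * (y $ l)\<^sup>2)"
    by (rule sum.cong) (auto simp: dP_J power_mult_distrib)
  also have "\<dots> = 4 * (w 0)\<^sup>2 * sJ y" by (simp add: sJ_def sum_distrib_left)
  also have "(\<Sum>i\<in>{1..<k}. (dP_adj k (PP J e) y w $ e i)\<^sup>2) = (\<Sum>i\<in>{1..<k}. (w i)\<^sup>2)"
    by (rule sum.cong) (auto simp: dP_e)
  finally show ?thesis .
qed

lemma zero_iff: "(\<forall>i<k. mpoly_eval (PP J e i) y = 0) \<longleftrightarrow> sJ y = 1 \<and> (\<forall>l. l \<notin> J \<longrightarrow> y $ l = 0)"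
proof -
  have "(\<forall>i<k. mpoly_eval (PP J e i) y = 0) \<longleftrightarrow> sJ y = 1 \<and> (\<forall>i\<in>{1..<k}. y $ e i = 0)"
    using k1 by (auto simp: PP_def eval_c0 eval_cx sJ_def)
  also have "(\<forall>i\<in>{1..<k}. y $ e i = 0) \<longleftrightarrow> (\<forall>l. l \<notin> J \<longrightarrow> y $ l = 0)"
    using notJ_e e_notJ by blast
  finally show ?thesis .
qed

lemma sO_zero: "(\<forall>l. l \<notin> J \<longrightarrow> y $ l = 0) \<Longrightarrow> sO y = 0"
  unfolding sO_def using e_notJ by (auto intro!: sum.neutral)

lemma zero_set_eq: "zero_set k (PP J e) (ball 0 2) = coord_sphere J"
proof -
  have "y \<in> zero_set k (PP J e) (ball 0 2) \<longleftrightarrow> y \<in> coord_sphere J" for y :: "real^'n"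
  proof
    assume "y \<in> zero_set k (PP J e) (ball 0 2)"
    then have z: "sJ y = 1" "\<forall>l. l \<notin> J \<longrightarrow> y $ l = 0" using zero_iff by (auto simp: zero_set_def)
    then have "(norm y)\<^sup>2 = 1" using normsq sO_zero by simp
    then have "norm y = 1" using norm_ge_zero[of y] by (auto simp: power2_eq_1_iff)
    then show "y \<in> coord_sphere J" using z by (simp add: coord_sphere_def)
  next
    assume y: "y \<in> coord_sphere J"
    then have z: "norm y = 1" "\<forall>l. l \<notin> J \<longrightarrow> y $ l = 0" by (auto simp: coord_sphere_def)
    then have "sJ y = 1" using normsq[of y] sO_zero by simp
    then show "y \<in> zero_set k (PP J e) (ball 0 2)" using z zero_iff by (simp add: zero_set_def)
  qed
  then show ?thesis by blast
qed


lemma compact_cs: "compact (coord_sphere J)"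
proof -
  have eq: "coord_sphere J = sphere 0 1 \<inter> (\<Inter>i\<in>-J. {x::real^'n. x $ i = 0})"
    by (auto simp: coord_sphere_def)
  have "closed (\<Inter>i\<in>-J. {x::real^'n. x $ i = 0})"
    by (intro closed_INT ballI closed_Collect_eq continuous_intros) 
  then show ?thesis unfolding eq by (intro compact_Int_closed compact_sphere)
qed

lemma regular: "regular_pair k (ball 0 2) (PP J e)"
  unfolding regular_pair_def
proof (intro conjI)
  show "open (ball (0::real^'n) 2)" by simp
  show "bounded (ball (0::real^'n) 2)" by simp
  show "\<forall>i<k. is_mpoly (PP J e i)" by (simp add: PP_def is_mpoly_c0 is_mpoly_cx)
  show "compact (zero_set k (PP J e) (ball 0 2))" by (simp add: zero_set_eq compact_cs)
  show "\<forall>y\<in>zero_set k (PP J e) (ball 0 2). \<forall>w. \<exists>h::real^'n. \<forall>i<k. frechet_derivative (mpoly_eval (PP J e i)) (at y) h = w i"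
  proof (intro ballI allI)
  fix y w assume y: "y \<in> zero_set k (PP J e) (ball 0 2)"
  then have z: "sJ y = 1" "\<forall>l. l \<notin> J \<longrightarrow> y $ l = 0" using zero_iff by (auto simp: zero_set_def)
  define h :: "real^'n" where "h = (\<chi> l. if l \<in> J then w 0 / 2 * y $ l else (\<Sum>i\<in>{1..<k}. w i * (if l = e i then 1 else 0)))"
  have "\<forall>i<k. frechet_derivative (mpoly_eval (PP J e i)) (at y) h = w i"
  proof (intro allI impI)
    fix i assume i: "i < k"
    show "frechet_derivative (mpoly_eval (PP J e i)) (at y) h = w i"
    proof (cases "i = 0")
      case True
      have "(\<Sum>j\<in>J. 2 * y $ j * h $ j) = (\<Sum>j\<in>J. w 0 * (y $ j)\<^sup>2)"
        by (rule sum.cong) (auto simp: h_def power2_eq_square)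
      also have "\<dots> = w 0 * sJ y" by (simp add: sJ_def sum_distrib_left)
      finally show ?thesis using True z by (simp add: PP_def deriv_c0)
    next
      case False
      then have i1: "i \<in> {1..<k}" using i by auto
      have "h $ e i = (\<Sum>i'\<in>{1..<k}. w i' * (if e i = e i' then 1 else 0))"
        using e_notJ[OF i1] by (simp add: h_def)
      also have "\<dots> = (\<Sum>i'\<in>{1..<k}. if i' = i then w i' else 0)"
        by (rule sum.cong) (use i1 e_inj in auto)
      also have "\<dots> = w i" using i1 by simp
      finally show ?thesis using False by (simp add: PP_def deriv_cx)
    qed
  qed
  then show "\<exists>h::real^'n. \<forall>i<k. frechet_derivative (mpoly_eval (PP J e i)) (at y) h = w i" by blast
  qed
qed

lemma knorm_nonneg: "0 \<le> knorm k w" by (simp add: knorm_def sum_nonneg)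

lemma Tset_mem: "(1/4, 1) \<in> Tset k (ball 0 2) (PP J e)"
proof -
  have A: "\<exists>K. compact K \<and> K \<subseteq> ball 0 2 \<and> (\<exists>\<delta>'>1/4. \<forall>y\<in>ball 0 2 - K. knorm k (Pval k (PP J e) y) \<ge> \<delta>')"
  proof (intro exI conjI)
    show "compact (cball (0::real^'n) (3/2))" by simp
    show "cball (0::real^'n) (3/2) \<subseteq> ball 0 2" by (auto simp: subset_eq)
    show "(1/4::real) < 1/2" by simp
    show "\<forall>y\<in>ball 0 2 - cball 0 (3/2). 1/2 \<le> knorm k (Pval k (PP J e) y)"
    proof
      fix y :: "real^'n" assume "y \<in> ball 0 2 - cball 0 (3/2)"
      then have "3/2 < norm y" by simp
      then have "(3/2)\<^sup>2 < (norm y)\<^sup>2" by (intro power_strict_mono) auto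
      then have s: "9/4 < sJ y + sO y" using normsq by (simp add: power2_eq_square)
      have "1/4 \<le> (sJ y - 1)\<^sup>2 + sO y"
      proof (cases "sO y \<ge> 1/4")
        case True then show ?thesis by (simp add: add_increasing)
      next
        case False
        then have "1 \<le> sJ y - 1" using s by simp
        then have "1 \<le> (sJ y - 1)\<^sup>2" by (simp add: one_le_power)
        then show ?thesis using sO_nonneg[of y] by simp
      qed
      then have "(1/2)\<^sup>2 \<le> (knorm k (Pval k (PP J e) y))\<^sup>2" unfolding knorm_Pval by (simp add: power2_eq_square)
      then show "1/2 \<le> knorm k (Pval k (PP J e) y)" by (rule power2_le_imp_le) (rule knorm_nonneg)
    qed
  qed
  have B: "\<forall>y\<in>ball 0 2. knorm k (Pval k (PP J e) y) < 1/4 \<longrightarrow> (\<forall>w. norm (dP_adj k (PP J e) y w) \<ge> 1 * knorm k w)"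
  proof (intro ballI impI allI)
    fix y :: "real^'n" and w :: "nat \<Rightarrow> real" assume "knorm k (Pval k (PP J e) y) < 1/4"
    then have "(knorm k (Pval k (PP J e) y))\<^sup>2 < (1/4)\<^sup>2" by (intro power_strict_mono knorm_nonneg) auto
    then have q: "(sJ y - 1)\<^sup>2 < 1/16" using sO_nonneg[of y] unfolding knorm_Pval by (simp add: power2_eq_square)
    have "3/4 < sJ y"
    proof (rule ccontr)
      assume "\<not> 3/4 < sJ y"
      then have "1/4 \<le> 1 - sJ y" by simp
      then have "(1/4)\<^sup>2 \<le> (1 - sJ y)\<^sup>2" by (intro power_mono) auto
      then show False using q power2_commute[of "sJ y" 1] by (simp add: power_divide)
    qed
    then have "(w 0)\<^sup>2 \<le> 4 * (w 0)\<^sup>2 * sJ y"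
    proof -
      have "(w 0)\<^sup>2 * 1 \<le> (w 0)\<^sup>2 * (4 * sJ y)" using \<open>3/4 < sJ y\<close> by (intro mult_left_mono) auto
      then show ?thesis by simp
    qed
    then have "(knorm k w)\<^sup>2 \<le> (norm (dP_adj k (PP J e) y w))\<^sup>2" by (simp add: knorm_sq dP_normsq)
    then have "knorm k w \<le> norm (dP_adj k (PP J e) y w)" by (rule power2_le_imp_le) simp
    then show "norm (dP_adj k (PP J e) y w) \<ge> 1 * knorm k w" by simp
  qed
  show ?thesis unfolding Tset_def mem_Collect_eq case_prod_conv
    by (intro conjI) (simp, simp, rule A, rule B)
qed

end

lemma isotopic_refl: "ambient_isotopic (S::(real^'n::finite) set) S"
proof -
  let ?H = "\<lambda>p::real \<times> (real^'n). snd p"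
  have a: "smooth_map ?H"
    unfolding smooth_map_def by (intro allI Ck_linear bounded_linear_snd)
  have b: "\<forall>t. bij (\<lambda>x. ?H (t, x)) \<and> smooth_map (inv (\<lambda>x. ?H (t, x)))"
    unfolding smooth_map_def by (simp add: bij_def Ck_linear bounded_linear_ident)
  have c: "\<forall>x. ?H (0, x) = x" by simp
  have d: "(\<lambda>x. ?H (1, x)) ` S = S" by simp
  show ?thesis unfolding ambient_isotopic_def using a b c d by blast
qed

lemma L2_term:
  fixes f :: "complex^'n::finite \<Rightarrow> complex"
  assumes fb: "\<And>z. cmod (f z) \<le> (norm z)\<^sup>2 + 1"
  shows "(\<integral>z. (cmod (f z))\<^sup>2 * exp (- pi * (norm z)\<^sup>2) \<partial>(lborel::(complex^'n) measure)) \<le> pi ^ CARD('n)"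
proof -
  let ?g = "\<lambda>z::complex^'n. exp (-(norm z)\<^sup>2)"
  let ?F = "\<lambda>z::complex^'n. (cmod (f z))\<^sup>2 * exp (- pi * (norm z)\<^sup>2)"
  have hg: "has_bochner_integral lborel ?g (sqrt pi ^ DIM(complex^'n))" by (rule gaussN)
  have ig: "integrable lborel ?g" using hg by (simp add: has_bochner_integral_iff)
  have vg: "integral\<^sup>L lborel ?g = pi ^ CARD('n)"
  proof -
    have "integral\<^sup>L lborel ?g = sqrt pi ^ (CARD('n) * 2)" using hg by (simp add: has_bochner_integral_iff)
    also have "\<dots> = (sqrt pi ^ 2) ^ CARD('n)" by (metis power_mult mult.commute)
    also have "\<dots> = pi ^ CARD('n)" by simp
    finally show ?thesis .
  qed
  have pt: "?F z \<le> ?g z" for z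
  proof -
    let ?t = "(norm z)\<^sup>2"
    have t0: "0 \<le> ?t" by simp
    have "(cmod (f z))\<^sup>2 \<le> (?t + 1)\<^sup>2" using fb[of z] by (intro power_mono) auto
    also have "\<dots> \<le> (exp ?t)\<^sup>2" using exp_ge_add_one_self[of ?t] by (intro power_mono) (auto simp: add.commute)
    also have "\<dots> = exp (2 * ?t)" by (simp add: power2_eq_square exp_add[symmetric])
    finally have a: "(cmod (f z))\<^sup>2 \<le> exp (2 * ?t)" .
    have "?F z \<le> exp (2 * ?t) * exp (- pi * ?t)" by (intro mult_right_mono a) auto
    also have "\<dots> = exp (2 * ?t - pi * ?t)" by (simp add: exp_add[symmetric])
    also have "\<dots> \<le> exp (- ?t)"
    proof -
      have "3 * ?t \<le> pi * ?t" using pi_gt3 t0 by (intro mult_right_mono) auto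
      then show ?thesis by simp
    qed
    finally show ?thesis .
  qed
  have "integral\<^sup>L lborel ?F \<le> integral\<^sup>L lborel ?g"
  proof (cases "integrable lborel ?F")
    case True
    then show ?thesis using ig pt by (intro integral_mono) auto
  next
    case False
    then have "integral\<^sup>L lborel ?F = 0" by (rule not_integrable_integral_eq)
    moreover have "0 \<le> integral\<^sup>L lborel ?g" by (intro integral_nonneg_AE) auto
    ultimately show ?thesis by simp
  qed
  then show ?thesis using vg by simp
qed

lemma le_sq1: "(x::real) \<le> x\<^sup>2 + 1"
proof -
  have "0 \<le> (x - 1/2)\<^sup>2" by simp
  then show ?thesis by (simp add: power2_eq_square algebra_simps)
qed

lemma cmod_c0: "cmod (mpoly_ceval (c0 J) z) \<le> (norm z)\<^sup>2 + 1"
proof -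
  have "cmod (mpoly_ceval (c0 J) z) \<le> cmod (\<Sum>j\<in>J. (z $ j)\<^sup>2) + cmod 1"
    unfolding ceval_c0 by (rule norm_triangle_ineq4)
  also have "cmod (\<Sum>j\<in>J. (z $ j)\<^sup>2) \<le> (\<Sum>j\<in>J. (cmod (z $ j))\<^sup>2)"
    by (rule order_trans[OF norm_sum]) (simp add: norm_power)
  also have "\<dots> \<le> (\<Sum>j\<in>UNIV. (cmod (z $ j))\<^sup>2)" by (rule sum_mono2) auto
  also have "\<dots> = (norm z)\<^sup>2" by (simp add: normsq_vec)
  finally show ?thesis by simp
qed

lemma cmod_cx: "cmod (mpoly_ceval (cx l) (z::complex^'n::finite)) \<le> (norm z)\<^sup>2 + 1"
proof -
  have "norm (z $ l) \<le> norm z" by (rule Finite_Cartesian_Product.norm_nth_le)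
  then show ?thesis unfolding ceval_cx using le_sq1[of "norm z"] by simp
qed

lemma L2sq_bound:
  fixes J :: "'n::finite set" and e :: "nat \<Rightarrow> 'n"
  shows "L2sq k (PP J e) \<le> real k * pi ^ CARD('n)"
proof -
  have "L2sq k (PP J e) \<le> (\<Sum>i<k. pi ^ CARD('n))"
    unfolding L2sq_def
  proof (rule sum_mono)
    fix i assume "i \<in> {..<k}"
    show "(\<integral>z. (cmod (mpoly_ceval (PP J e i) z))\<^sup>2 * exp (- pi * (norm z)\<^sup>2) \<partial>(lborel::(complex^'n) measure)) \<le> pi ^ CARD('n)"
      by (rule L2_term) (simp add: PP_def cmod_c0 cmod_cx)
  qed
  then show ?thesis by simp
qed

lemma L2sq_nonneg: "0 \<le> L2sq k P"
  unfolding L2sq_def by (intro sum_nonneg integral_nonneg_AE) auto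

lemma Rpair_bounds: "1 \<le> Rpair (ball (0::real^'n::finite) 2)" "Rpair (ball (0::real^'n) 2) \<le> 2"
proof -
  show "1 \<le> Rpair (ball (0::real^'n::finite) 2)" by (simp add: Rpair_def)
  have "(SUP y\<in>ball (0::real^'n) 2. norm y) \<le> 2"
    by (rule cSUP_least) (auto simp: less_imp_le)
  then show "Rpair (ball (0::real^'n) 2) \<le> 2" by (simp add: Rpair_def)
qed

lemma rho_bounds:
  assumes R: "1 \<le> R" "R \<le> 2"
  shows "0 \<le> rho n R" "rho n R \<le> 9 ^ n * exp (9 * pi)"
proof -
  let ?h = "\<lambda>s. (R + s) ^ (2*n) / s ^ (2*n) * exp (pi * (R + s)\<^sup>2)"
  have nn: "\<And>s. s \<in> {0<..} \<Longrightarrow> 0 \<le> ?h s" using R by simp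
  show "0 \<le> rho n R" unfolding rho_def
    by (rule cINF_greatest) (use nn in auto)
  have bb: "bdd_below (?h ` {0<..})" by (rule bdd_belowI2[where m=0]) (rule nn)
  have "rho n R \<le> ?h 1" unfolding rho_def
    by (rule cINF_lower[OF bb]) simp
  also have "\<dots> = (R+1) ^ (2*n) * exp (pi * (R + 1)\<^sup>2)" by simp
  also have "\<dots> \<le> 3 ^ (2*n) * exp (9 * pi)"
  proof (intro mult_mono)
    show "(R+1) ^ (2*n) \<le> 3 ^ (2*n)" using R by (intro power_mono) auto
    have "(R+1)\<^sup>2 \<le> 3\<^sup>2" using R by (intro power_mono) auto
    then have "pi * (R + 1)\<^sup>2 \<le> pi * 9" by (intro mult_left_mono) auto
    then show "exp (pi * (R + 1)\<^sup>2) \<le> exp (9 * pi)" by (simp add: mult.commute)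
  qed auto
  also have "(3::real) ^ (2*n) = 9 ^ n" by (simp add: power_mult)
  finally show "rho n R \<le> 9 ^ n * exp (9 * pi)" .
qed

lemma vol_bounds: "0 < measure lborel (ball (0::real^'n::finite) R)" if "0 < R"
  using content_ball_pos[OF that] by simp

lemma vol_upper: assumes "R \<le> 2" shows "measure lborel (ball (0::real^'n::finite) R) \<le> 4 ^ CARD('n)"
proof -
  let ?a = "(\<chi> i. -2) :: real^'n" and ?b = "(\<chi> i. 2) :: real^'n"
  have sub: "ball (0::real^'n) R \<subseteq> cbox ?a ?b"
  proof
    fix x :: "real^'n" assume "x \<in> ball 0 R"
    then have "norm x < 2" using assms by simp
    then have "\<bar>x $ i\<bar> \<le> 2" for i using component_le_norm_cart[of x i] by linarith
    then have "-2 \<le> x $ i \<and> x $ i \<le> 2" for i by (metis abs_le_iff minus_le_iff)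
    then show "x \<in> cbox ?a ?b" by (simp add: mem_box_cart)
  qed
  have "measure lborel (ball (0::real^'n) R) \<le> measure lborel (cbox ?a ?b)"
    by (rule measure_mono_fmeasurable[OF sub]) auto
  also have "\<dots> = (\<Prod>i\<in>(UNIV::'n set). (4::real))"
  proof -
    have "(0::real^'n) \<in> cbox ?a ?b" by (simp add: mem_box_cart)
    then have "cbox ?a ?b \<noteq> {}" by blast
    then show ?thesis by (simp add: content_cbox_cart)
  qed
  finally show ?thesis by simp
qed


lemma cube_le_3pow_aux: "3 \<le> n \<Longrightarrow> (n::nat)^3 \<le> 3^n"
proof (induction n rule: nat_induct_at_least)
  case base then show ?case by simp
next
  case (Suc n)
  have a: "3*n^2 \<le> n^3"
  proof -
    have "3*n^2 \<le> n*n^2" using Suc.hyps by (intro mult_right_mono) auto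
    then show ?thesis by (simp add: power2_eq_square power3_eq_cube)
  qed
  have b: "3*n+1 \<le> n^3"
  proof -
    have "9 \<le> n*n" using Suc.hyps mult_le_mono[of 3 n 3 n] by simp
    then have "9*n \<le> (n*n)*n" by (intro mult_right_mono) auto
    then have "3*n+1 \<le> n*n*n" using Suc.hyps by linarith
    then show ?thesis by (simp add: power3_eq_cube)
  qed
  have "(Suc n)^3 = n^3 + 3*n^2 + 3*n + 1" by (simp add: power3_eq_cube power2_eq_square algebra_simps)
  also have "\<dots> \<le> 3 * n^3" using a b by simp
  also have "\<dots> \<le> 3 * 3^n" using Suc.IH by simp
  finally show ?case by simp
qed

lemma cube_le_3pow: "(n::nat)^3 \<le> 3^n"
proof (cases "3 \<le> n")
  case True then show ?thesis by (rule cube_le_3pow_aux)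
next
  case False
  then have "n = 0 \<or> n = 1 \<or> n = 2" by auto
  then show ?thesis by auto
qed

lemma e5: "108 \<le> exp (5::real)"
proof -
  have "13/8 \<le> exp (1/2::real)" using exp_lower_Taylor_quadratic[of "1/2::real"] by (simp add: power2_eq_square)
  then have "(13/8::real)^10 \<le> exp (1/2::real) ^ 10" by (intro power_mono) auto
  also have "exp (1/2::real) ^ 10 = exp 5" using exp_of_nat_mult[of 10 "1/2::real"] by simp
  finally have "(13/8::real)^10 \<le> exp 5" .
  moreover have "(108::real) \<le> (13/8)^10" by (simp add: power_divide)
  ultimately show ?thesis by linarith
qed

lemma e18: "1929 \<le> exp (18::real)"
proof -
  have "101/2 \<le> exp (9::real)" using exp_lower_Taylor_quadratic[of "9::real"] by (simp add: power2_eq_square)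
  then have "(101/2::real)^2 \<le> exp (9::real) ^ 2" by (intro power_mono) auto
  also have "exp (9::real) ^ 2 = exp 18" using exp_of_nat_mult[of 2 "9::real"] by simp
  finally have "(101/2::real)^2 \<le> exp 18" .
  moreover have "(1929::real) \<le> (101/2)^2" by (simp add: power_divide)
  ultimately show ?thesis by linarith
qed

lemma e2: "2 * sqrt pi \<le> exp (2::real)"
proof -
  have "sqrt pi \<le> sqrt 4" using pi_less_4 by (intro real_sqrt_le_mono) simp
  then have "2 * sqrt pi \<le> 4" by simp
  also have "(4::real) \<le> exp 2" using exp_lower_Taylor_quadratic[of "2::real"] by simp
  finally show ?thesis .
qed

lemma e3: "8 \<le> exp (3::real)"
  using exp_lower_Taylor_quadratic[of "3::real"] by (simp add: power2_eq_square)

lemma final_arith: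
  fixes n k :: nat
  assumes k1: "1 \<le> k" and kn: "k \<le> n"
  shows "4 * (24 * real k * (9 ^ n * exp (9 * pi)) * (real k * pi ^ n) * (16 + pi * real n)) + 6 + 3 * real n
         \<le> exp (54 + 5 * real n)"
proof -
  define N where "N = real n"
  have N1: "1 \<le> N" using k1 kn by (simp add: N_def)
  have kN: "real k \<le> N" using kn by (simp add: N_def)
  have k0: "0 \<le> real k" by simp
  have p9: "(9::real) ^ n * pi ^ n \<le> 36 ^ n"
  proof -
    have "(9::real) ^ n * pi ^ n = (9 * pi) ^ n" by (simp add: power_mult_distrib)
    also have "\<dots> \<le> 36 ^ n" using pi_less_4 pi_gt_zero by (intro power_mono) auto
    finally show ?thesis .
  qed
  have e9: "exp (9 * pi) \<le> exp 36" using pi_less_4 by simp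
  have s16: "16 + pi * N \<le> 20 * N"
  proof -
    have "pi * N \<le> 4 * N" by (rule mult_right_mono) (use pi_less_4 N1 in auto)
    then show ?thesis using N1 by linarith
  qed
  define X where "X = N ^ 3 * 36 ^ n"
  have X0: "0 \<le> X" unfolding X_def using N1 by simp
  have NX: "N \<le> X"
  proof -
    have nn: "1 \<le> N*N" using mult_mono[of 1 N 1 N] N1 by simp
    have "N * 1 \<le> N * (N*N)" using nn N1 by (intro mult_left_mono) auto
    then have "N * 1 \<le> N^3 * 1" by (simp add: power3_eq_cube)
    also have "\<dots> \<le> N^3 * 36 ^ n" using N1 by (intro mult_left_mono) auto
    finally show ?thesis by (simp add: X_def)
  qed
  let ?T = "24 * real k * (9 ^ n * exp (9 * pi)) * (real k * pi ^ n) * (16 + pi * real n)"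
  have "?T = 24 * ((real k * real k) * ((9^n * pi^n) * (exp (9*pi) * (16 + pi * N))))"
    by (simp add: N_def algebra_simps)
  also have "\<dots> \<le> 24 * ((N * N) * (36^n * (exp 36 * (20 * N))))"
  proof -
    have a: "exp (9*pi) * (16 + pi * N) \<le> exp 36 * (20 * N)"
      by (rule mult_mono[OF e9 s16]) (use N1 pi_gt_zero in auto)
    have b: "(9^n * pi^n) * (exp (9*pi) * (16 + pi * N)) \<le> 36^n * (exp 36 * (20 * N))"
      by (rule mult_mono[OF p9 a]) (use N1 pi_gt_zero in auto)
    have c: "real k * real k \<le> N * N" by (rule mult_mono[OF kN kN]) (use N1 in auto)
    have "(real k * real k) * ((9^n * pi^n) * (exp (9*pi) * (16 + pi * N))) \<le> (N * N) * (36^n * (exp 36 * (20 * N)))"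
      by (rule mult_mono[OF c b]) (use N1 pi_gt_zero in auto)
    then show ?thesis by linarith
  qed
  also have "\<dots> = 480 * exp 36 * X" by (simp add: X_def power3_eq_cube algebra_simps)
  finally have T: "?T \<le> 480 * exp 36 * X" .
  have "4 * ?T + 6 + 3 * real n \<le> 1920 * exp 36 * X + 9 * X"
    using T NX X0 N1 unfolding N_def by linarith
  also have "\<dots> \<le> 1929 * exp 36 * X"
  proof -
    have "9 * X \<le> 9 * exp 36 * X" using X0 by (simp add: mult_right_mono)
    then show ?thesis by (simp add: algebra_simps)
  qed
  also have "\<dots> \<le> exp 18 * exp 36 * exp (5 * N)"
  proof (rule mult_mono)
    show "1929 * exp 36 \<le> exp 18 * exp (36::real)" using e18 by simp
    have "real (n^3) \<le> real (3^n)" using cube_le_3pow of_nat_le_iff by blast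
    then have "N^3 \<le> 3^n" by (simp add: N_def)
    then have "X \<le> 3^n * 36^n" unfolding X_def by (intro mult_right_mono) auto
    also have "\<dots> = 108 ^ n" by (simp add: power_mult_distrib[symmetric])
    also have "\<dots> \<le> exp 5 ^ n" using e5 by (intro power_mono) auto
    also have "\<dots> = exp (5 * N)" using exp_of_nat_mult[of n "5::real"] by (simp add: N_def mult.commute)
    finally show "X \<le> exp (5 * N)" .
  qed (use X0 in auto)
  also have "\<dots> = exp (54 + 5 * real n)" by (simp add: N_def exp_add[symmetric])
  finally show ?thesis .
qed


theorem proposition2p16:
  fixes k :: nat and J :: "'n::finite set"
  assumes "1 \<le> k" and "k \<le> CARD('n)" and "card J = CARD('n) - k + 1"
  shows "c_Sigma k (coord_sphere J :: (real^'n) set) \<ge> ereal (exp (- exp (54 + 5 * real CARD('n))))"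
proof -
  note k1 = assms(1) and kn = assms(2) and cJ = assms(3)
  let ?n = "CARD('n)"
  have cC: "card (-J) = k - 1"
  proof -
    have "card (-J) = card (UNIV::'n set) - card J"
      unfolding Compl_eq_Diff_UNIV by (rule card_Diff_subset) auto
    then show ?thesis using cJ k1 kn by simp
  qed
  obtain h where h: "bij_betw h {0..<k-1} (-J)"
    using ex_bij_betw_nat_finite[of "-J"] cC by auto
  have sh: "bij_betw (\<lambda>i::nat. i - 1) {1..<k} {0..<k-1}"
    unfolding bij_betw_def inj_on_def
  proof (intro conjI ballI impI)
    show "(\<lambda>i::nat. i - 1) ` {1..<k} = {0..<k-1}"
    proof
      show "(\<lambda>i::nat. i - 1) ` {1..<k} \<subseteq> {0..<k-1}" by auto
      show "{0..<k-1} \<subseteq> (\<lambda>i::nat. i - 1) ` {1..<k}"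
      proof
        fix x assume "x \<in> {0..<k-1}"
        then have "Suc x \<in> {1..<k}" "x = Suc x - 1" by auto
        then show "x \<in> (\<lambda>i::nat. i - 1) ` {1..<k}" by blast
      qed
    qed
  qed auto
  define e where "e = h \<circ> (\<lambda>i::nat. i - 1)"
  have eb: "bij_betw e {1..<k} (-J)" unfolding e_def by (rule bij_betw_trans[OF sh h])
  define U :: "(real^'n) set" where "U = ball 0 2"
  define P where "P = PP J e"
  have reg: "regular_pair k U P" unfolding U_def P_def by (rule regular[OF k1 eb])
  have zs: "zero_set k P U = coord_sphere J" unfolding U_def P_def by (rule zero_set_eq[OF k1 eb])
  have inI: "(U, P) \<in> I_set k (coord_sphere J)"
    unfolding I_set_def using reg zs isotopic_refl[of "coord_sphere J"] by auto
  have Tm: "(1/4, 1) \<in> Tset k U P" unfolding U_def P_def by (rule Tset_mem[OF k1 eb])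
  then have Tne: "Tset k U P \<noteq> {}" by blast
  have inS: "(U, P) \<in> {UP \<in> I_set k (coord_sphere J). Tset k (fst UP) (snd UP) \<noteq> {}}"
    using inI Tne by simp
  define R where "R = Rpair U"
  have R1: "1 \<le> R" "R \<le> 2" unfolding R_def U_def using Rpair_bounds by auto
  define \<rho> where "\<rho> = rho ?n R"
  have rho0: "0 \<le> \<rho>" and rho1: "\<rho> \<le> 9 ^ ?n * exp (9 * pi)"
    unfolding \<rho>_def using rho_bounds[OF R1] by auto
  define L where "L = L2sq k P"
  have L0: "0 \<le> L" unfolding L_def by (rule L2sq_nonneg)
  have L1: "L \<le> real k * pi ^ ?n" unfolding L_def P_def by (rule L2sq_bound)
  let ?f = "\<lambda>p::real\<times>real. 1 / (fst p)\<^sup>2 + pi * real ?n / (snd p)\<^sup>2"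
  define Iv where "Iv = (INF p\<in>Tset k U P. ?f p)"
  have fnn: "\<And>p. 0 \<le> ?f p" by simp
  have Iv0: "0 \<le> Iv" unfolding Iv_def by (rule cINF_greatest[OF Tne fnn])
  have bbI: "bdd_below (?f ` Tset k U P)" by (rule bdd_belowI2[where m=0]) (rule fnn)
  have "Iv \<le> ?f (1/4, 1)" unfolding Iv_def by (rule cINF_lower[OF bbI Tm])
  then have Iv1: "Iv \<le> 16 + pi * real ?n" by (simp add: power_divide)
  define t where "t = tau k U P"
  have teq: "t = 24 * real k * \<rho> * L * Iv" unfolding t_def tau_def \<rho>_def R_def L_def Iv_def by simp
  define T where "T = 24 * real k * (9 ^ ?n * exp (9 * pi)) * (real k * pi ^ ?n) * (16 + pi * real ?n)"
  have t0: "0 \<le> t" unfolding teq using rho0 L0 Iv0 by simp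
  have tT: "t \<le> T"
  proof -
    have s1: "24 * real k * \<rho> \<le> 24 * real k * (9 ^ ?n * exp (9 * pi))"
      using rho1 by (intro mult_left_mono) auto
    have s2: "24 * real k * \<rho> * L \<le> 24 * real k * (9 ^ ?n * exp (9 * pi)) * (real k * pi ^ ?n)"
      by (rule mult_mono[OF s1 L1]) (use rho0 L0 in auto)
    have s3: "24 * real k * \<rho> * L * Iv \<le> T"
      unfolding T_def by (rule mult_mono[OF s2 Iv1]) (use rho0 L0 Iv0 in auto)
    then show ?thesis using teq by simp
  qed
  define m where "m = m_tau t"
  have m1: "exp (-(4*T+4)) / (2 * sqrt pi) \<le> m" unfolding m_def by (rule m_tau_lower[OF t0 tT])
  define V where "V = measure lborel (ball (0::real^'n) R)"
  have V0: "0 < V" unfolding V_def using R1 by (intro vol_bounds) auto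
  have V1: "V \<le> 4 ^ ?n" unfolding V_def by (rule vol_upper[OF R1(2)])
  have m0: "0 < m" using m1 by (smt (verit) divide_pos_pos exp_gt_zero pi_gt_zero real_sqrt_gt_zero)
  have key: "exp (- exp (54 + 5 * real ?n)) \<le> m / (2 ^ ?n * V)"
  proof -
    have "exp (- exp (54 + 5 * real ?n)) \<le> exp (-(4*T+4) - 2 - 3 * real ?n)"
      using final_arith[OF k1 kn] unfolding T_def by simp
    also have "\<dots> = exp (-(4*T+4)) / (exp 2 * exp (3 * real ?n))"
      by (simp only: exp_diff divide_divide_eq_left)
    also have "\<dots> \<le> exp (-(4*T+4)) / (2 * sqrt pi * 8 ^ ?n)"
    proof (rule divide_left_mono)
      have "(8::real) ^ ?n \<le> exp 3 ^ ?n" using e3 by (intro power_mono) auto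
      also have "\<dots> = exp (3 * real ?n)" using exp_of_nat_mult[of ?n "3::real"] by (simp add: mult.commute)
      finally have "(8::real) ^ ?n \<le> exp (3 * real ?n)" .
      then show "2 * sqrt pi * 8 ^ ?n \<le> exp 2 * exp (3 * real ?n)"
        by (rule mult_mono[OF e2]) auto
      show "0 \<le> exp (-(4*T+4))" by simp
      show "0 < exp 2 * exp (3 * real ?n) * (2 * sqrt pi * 8 ^ ?n)" by simp
    qed
    also have "\<dots> = (exp (-(4*T+4)) / (2 * sqrt pi)) / 8 ^ ?n" by simp
    also have "\<dots> \<le> m / 8 ^ ?n" using m1 by (intro divide_right_mono) auto
    also have "\<dots> = m / (2 ^ ?n * 4 ^ ?n)" by (simp add: power_mult_distrib[symmetric])
    also have "\<dots> \<le> m / (2 ^ ?n * V)"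
      by (rule divide_left_mono) (use V0 V1 m0 in auto)
    finally show ?thesis .
  qed
  have "ereal (m / (2 ^ ?n * V)) \<le> c_Sigma k (coord_sphere J :: (real^'n) set)"
    unfolding c_Sigma_def m_def t_def V_def R_def
    using SUP_upper[OF inS, of "\<lambda>UP. ereal (m_tau (tau k (fst UP) (snd UP)) /
             (2 ^ CARD('n) * measure lborel (ball (0::real^'n) (Rpair (fst UP)))))"]
    by simp
  then show ?thesis using key by (meson ereal_less_eq(3) order_trans)
qed

end
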